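(* Let $n\ge 3$ and $f=x^n+a_{n-1}x^{n-1}+\cdots+a_0\in\mathbb{C}[x]$ with roots $r_1,\ldots,r_n$ (with multiplicity). Define the polynomials \[f_1(x,y)=\frac{f(y)-f(x)}{y-x},\qquad f_3(x,y)=\frac{f(y)-2f\left(\frac{x+y}{2}\right)+f(x)}{\frac{(y-x)^2}{2}}.\] Let $D_2=\prod_{1\le i,j,k\le n,\ i<j,\ j\ne k,\ k\ne i}(2r_k-r_i-r_j)$. Then $\operatorname{res}(f,\operatorname{res}(f_1,f_3,y),x)=0$ if and only if $D_2=0$.
   Context: The quotients defining $f_1,f_3$ are polynomials in $x,y$. $\operatorname{res}$ denotes the Sylvester resultant with respect to the indicated variable. *)

theory Defs
  imports Complex_Main "HOL-Computational_Algebra.Polynomial" "Subresultants.Resultant_Prelim"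
begin

text \<open>Bivariate polynomials in x,y are represented as \<open>complex poly poly\<close>:
  polynomials in the (outer) variable y whose coefficients are polynomials in x.\<close>

definition var_x :: "complex poly poly" where
  "var_x = [: [:0, 1:] :]"

definition var_y :: "complex poly poly" where
  "var_y = [: 0, 1 :]"

definition in_y :: "complex poly \<Rightarrow> complex poly poly" where
  "in_y f = map_poly (\<lambda>c. [:c:]) f"

definition in_x :: "complex poly \<Rightarrow> complex poly poly" where
  "in_x f = [: f :]"

definition at_mid :: "complex poly \<Rightarrow> complex poly poly" where
  "at_mid f = pcompose (in_y f) (smult [:1/2:] (var_x + var_y))"

definition f1 :: "complex poly \<Rightarrow> complex poly poly" where
  "f1 f = (in_y f - in_x f) div (var_y - var_x)"

text \<open>f_3 = (f(y) - 2 f((x+y)/2) + f(x)) / ((y-x)^2/2)  (exact division).\<close>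
definition f3 :: "complex poly \<Rightarrow> complex poly poly" where
  "f3 f = (2 * (in_y f - 2 * at_mid f + in_x f)) div ((var_y - var_x) ^ 2)"

text \<open>D_2 for roots r_0,...,r_{n-1} (0-based indexing).\<close>
definition D2 :: "nat \<Rightarrow> (nat \<Rightarrow> complex) \<Rightarrow> complex" where
  "D2 n r = (\<Prod>(i,j,k)\<in>{(i,j,k). i < n \<and> j < n \<and> k < n \<and> i < j \<and> j \<noteq> k \<and> k \<noteq> i}.
               2 * r k - r i - r j)"

end

theory Submission imports Defs "Subresultants.Subresultant_Gcd" "HOL-Computational_Algebra.Field_as_Ring" "HOL-Computational_Algebra.Fundamental_Theorem_Algebra" begin

lemma res_zero_iff:
  fixes p q :: "complex poly" assumes "p \<noteq> 0"
  shows "resultant p q = 0 \<longleftrightarrow> (\<exists>x. poly p x = 0 \<and> poly q x = 0)"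
proof
  assume "resultant p q = 0"
  hence "degree (gcd p q) > 0" unfolding resultant_0_gcd by linarith
  from alg_closed_imp_poly_has_root[OF this] obtain x where x: "poly (gcd p q) x = 0" by (elim exE)
  hence d: "[:-x,1:] dvd gcd p q" by (simp only: poly_eq_0_iff_dvd)
  have "[:-x,1:] dvd p" by (rule dvd_trans[OF d gcd_dvd1])
  moreover have "[:-x,1:] dvd q" by (rule dvd_trans[OF d gcd_dvd2])
  ultimately have "poly p x = 0 \<and> poly q x = 0" by (simp only: poly_eq_0_iff_dvd)
  thus "\<exists>x. poly p x = 0 \<and> poly q x = 0" by (intro exI)
next
  assume "\<exists>x. poly p x = 0 \<and> poly q x = 0"
  then obtain x where "poly p x = 0" "poly q x = 0" by blast
  hence "[:-x,1:] dvd p" "[:-x,1:] dvd q" by (simp_all only: poly_eq_0_iff_dvd)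
  hence d: "[:-x,1:] dvd gcd p q" by (rule gcd_greatest)
  have "gcd p q \<noteq> 0" using assms by (simp only: gcd_eq_0_iff) simp
  from dvd_imp_degree_le[OF d this] have "degree (gcd p q) \<noteq> 0" by simp
  thus "resultant p q = 0" unfolding resultant_0_gcd .
qed

lemma dvd_sq:
  fixes p :: "'a::idom poly"
  assumes "poly p a = 0" "poly (pderiv p) a = 0"
  shows "[:-a,1:]^2 dvd p"
proof -
  from assms(1) obtain q where q: "p = [:-a,1:] * q" using poly_eq_0_iff_dvd by (metis dvdE)
  have "pderiv p = q + [:-a,1:] * pderiv q" unfolding q pderiv_mult by (simp add: pderiv_pCons)
  hence "poly q a = 0" using assms(2) by simp
  then obtain s where s: "q = [:-a,1:] * s" using poly_eq_0_iff_dvd by (metis dvdE)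
  show ?thesis unfolding q s by (metis power2_eq_square mult.assoc dvd_triv_left)
qed

interpretation const_hom: idom_hom "\<lambda>c::complex. [:c:]"
  by unfold_locales auto

lemma poly_in_y: "poly (in_y f) [:0,1:] = f"
  unfolding in_y_def
  by (induct f) (auto simp: map_poly_pCons algebra_simps pCons_eq_iff)

lemma poly_in_y': "poly (in_y f) (pCons 0 1) = f"
  using poly_in_y[of f] by (simp del: pCons_one add: pCons_one[symmetric])

lemma map_in_y: "map_poly (\<lambda>c. poly c a) (in_y f) = f"
  unfolding in_y_def by (simp add: map_poly_map_poly o_def)

lemma map_in_x: "map_poly (\<lambda>c. poly c a) (in_x f) = [:poly f a:]"
  unfolding in_x_def by (simp add: map_poly_simps)

lemma yx: "var_y - var_x = [:-[:0,1:],1:]"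
  by (simp add: var_x_def var_y_def)

lemma f1_eq: "(var_y - var_x) * f1 f = in_y f - in_x f"
proof -
  have "poly (in_y f - in_x f) [:0,1:] = 0" by (simp add: poly_in_y' in_x_def)
  hence "var_y - var_x dvd in_y f - in_x f" unfolding yx by (simp only: poly_eq_0_iff_dvd)
  thus ?thesis unfolding f1_def by (rule dvd_mult_div_cancel)
qed

lemma pderiv_in_y: "pderiv (in_y f) = in_y (pderiv f)"
  unfolding in_y_def by (rule poly_eqI) (simp add: coeff_pderiv coeff_map_poly of_nat_poly)

lemma f3_eq: "(var_y - var_x)^2 * f3 f = 2 * (in_y f - 2 * at_mid f + in_x f)"
proof -
  define m where "m = smult [:1/2:] (var_x + var_y)"
  have m: "m = [:[:0,1/2:],[:1/2:]:]" unfolding m_def var_x_def var_y_def by simp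
  have pm: "poly m (pCons 0 1) = pCons 0 1" unfolding m by simp
  have dm: "pderiv m = [:[:1/2:]:]" unfolding m by (simp add: pderiv_pCons)
  have am: "at_mid f = pcompose (in_y f) m" unfolding at_mid_def m_def ..
  have p1: "poly (2 * (in_y f - 2 * at_mid f + in_x f)) [:0,1:] = 0"
    by (simp add: am poly_pcompose pm poly_in_y' in_x_def)
  have d2: "pderiv (2::complex poly poly) = 0" by (metis pderiv_of_nat of_nat_numeral)
  have "pderiv (2 * (in_y f - 2 * at_mid f + in_x f)) = 2 * (in_y (pderiv f) - 2 * (pcompose (in_y (pderiv f)) m * [:[:1/2:]:]))"
    by (simp add: pderiv_mult pderiv_add pderiv_diff d2 am pderiv_pcompose dm pderiv_in_y in_x_def pderiv_smult)
  moreover have "poly (in_y (pderiv f)) (pCons 0 1) = pderiv f" by (rule poly_in_y')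
  ultimately have "poly (pderiv (2 * (in_y f - 2 * at_mid f + in_x f))) [:0,1:] = 
      2 * (pderiv f - 2 * (pderiv f * [:1/2:]))"
    by (simp add: poly_pcompose pm)
  moreover have "2 * (pderiv f - 2 * (pderiv f * [:1/2:])) = 0"
    by (simp add: numeral_poly algebra_simps)
  ultimately have p2: "poly (pderiv (2 * (in_y f - 2 * at_mid f + in_x f))) [:0,1:] = 0" by simp
  from p1 p2 have "[:-[:0,1:],1:]^2 dvd 2 * (in_y f - 2 * at_mid f + in_x f)" by (rule dvd_sq)
  thus ?thesis unfolding f3_def yx by (rule dvd_mult_div_cancel)
qed


lemma map_yx: "map_poly (\<lambda>c. poly c a) (var_y - var_x) = [:-a,1:]"
  by (simp add: yx map_poly_simps)

lemma P_eq: "[:-a,1:] * map_poly (\<lambda>c. poly c a) (f1 f) = f - [:poly f a:]"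
proof -
  interpret ev: map_poly_comm_ring_hom "\<lambda>c::complex poly. poly c a" ..
  have "map_poly (\<lambda>c. poly c a) ((var_y - var_x) * f1 f) = map_poly (\<lambda>c. poly c a) (in_y f - in_x f)"
    by (simp only: f1_eq)
  thus ?thesis unfolding ev.hom_mult map_yx by (simp only: ev.hom_minus map_in_y map_in_x)
qed

lemma map_mid: "map_poly (\<lambda>c. poly c a) (at_mid f) = f \<circ>\<^sub>p [:a/2,1/2:]"
proof -
  interpret ev: map_poly_comm_ring_hom "\<lambda>c::complex poly. poly c a" ..
  show ?thesis unfolding at_mid_def poly_hom.map_poly_pcompose map_in_y
    by (simp add: var_x_def var_y_def map_poly_simps)
qed

lemma Q_eq: "[:-a,1:]^2 * map_poly (\<lambda>c. poly c a) (f3 f) = 2 * (f - 2 * (f \<circ>\<^sub>p [:a/2,1/2:]) + [:poly f a:])"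
proof -
  interpret ev: map_poly_comm_ring_hom "\<lambda>c::complex poly. poly c a" ..
  have "map_poly (\<lambda>c. poly c a) ((var_y - var_x)^2 * f3 f) = map_poly (\<lambda>c. poly c a) (2 * (in_y f - 2 * at_mid f + in_x f))"
    by (simp only: f3_eq)
  thus ?thesis unfolding ev.hom_mult ev.hom_power map_yx by (simp only: ev.hom_minus ev.hom_add ev.hom_numeral ev.hom_mult map_in_y map_in_x map_mid)
qed

lemma deg_P:
  assumes "degree f > 0"
  shows "degree (map_poly (\<lambda>c. poly c a) (f1 f)) = degree f - 1"
    and "degree (f1 f) = degree f - 1"
proof -
  let ?P = "map_poly (\<lambda>c. poly c a) (f1 f)"
  have c0: "coeff [:poly f a:] (degree f) = 0" using assms by (intro coeff_eq_0) auto
  have "coeff (f - [:poly f a:]) (degree f) \<noteq> 0" using assms c0 by auto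
  hence "degree f \<le> degree (f - [:poly f a:])" by (rule le_degree)
  moreover have "degree (f - [:poly f a:]) \<le> degree f" by (rule degree_diff_le) auto
  ultimately have dr: "degree (f - [:poly f a:]) = degree f" by simp
  hence "f - [:poly f a:] \<noteq> 0" using assms by auto
  hence P0: "?P \<noteq> 0" using P_eq[of a f] by auto
  have "degree ([:-a,1:] * ?P) = degree ?P + 1" using P0 by (subst degree_mult_eq) auto
  hence dP: "degree ?P = degree f - 1" using P_eq[of a f] dr by simp
  have F0: "f1 f \<noteq> 0" using P0 by auto
  have "degree ((var_y - var_x) * f1 f) = degree (f1 f) + 1" using F0 unfolding yx by (subst degree_mult_eq) auto
  moreover have "degree (in_y f - in_x f) \<le> degree f"
    by (rule degree_diff_le) (auto simp: in_y_def in_x_def degree_map_poly_le)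
  ultimately have "degree (f1 f) \<le> degree f - 1" using f1_eq[of f] by simp
  moreover have "degree ?P \<le> degree (f1 f)" by (rule degree_map_poly_le)
  ultimately show "degree ?P = degree f - 1" "degree (f1 f) = degree f - 1" using dP by auto
qed

lemma coeff_2: "coeff (2 * (p::'a::comm_ring_1 poly)) k = 2 * coeff p k"
  by (simp add: numeral_poly)

lemma deg_Q:
  assumes "degree f \<ge> 2" "lead_coeff f = 1"
  shows "degree (map_poly (\<lambda>c. poly c a) (f3 f)) = degree f - 2"
    and "degree (f3 f) = degree f - 2"
proof -
  let ?Q = "map_poly (\<lambda>c. poly c a) (f3 f)"
  let ?N = "degree f"
  let ?R = "2 * (f - 2 * (f \<circ>\<^sub>p [:a/2,1/2:]) + [:poly f a:])"
  have dm: "degree (f \<circ>\<^sub>p [:a/2,1/2:]) = ?N" by (simp add: degree_pcompose)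
  have lm: "coeff (f \<circ>\<^sub>p [:a/2,1/2:]) ?N = (1/2)^?N"
    using lead_coeff_comp[of "[:a/2,1/2:]" f] assms dm by simp
  have c0: "coeff [:poly f a:] ?N = 0" using assms by (intro coeff_eq_0) auto
  have cR: "coeff ?R ?N = 2 * (1 - 2 * (1/2)^?N)" 
    by (simp only: coeff_2 coeff_add coeff_diff lm c0) (use assms in simp)
  have "(1/2::complex)^?N \<noteq> 1/2"
  proof
    assume h: "(1/2::complex)^?N = 1/2"
    have "norm ((1/2::complex)^?N) = norm (1/2::complex)" by (simp only: h)
    hence "(1/2::real)^?N = 1/2" by (simp add: norm_power norm_divide)
    moreover have "(1/2::real)^?N \<le> (1/2)^2" by (rule power_decreasing) (use assms(1) in auto)
    moreover have "(1/2::real)^2 = 1/4" by (simp add: power2_eq_square)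
    ultimately show False by linarith
  qed
  hence "coeff ?R ?N \<noteq> 0" unfolding cR by (auto simp: mult.commute)
  hence R1: "?N \<le> degree ?R" by (rule le_degree)
  have "\<forall>i>?N. coeff ?R i = 0" using dm by (auto simp only: coeff_2 coeff_add coeff_diff coeff_eq_0 degree_pCons_0) (auto simp: coeff_eq_0)
  hence "degree ?R \<le> ?N" by (rule degree_le)
  with R1 have dR: "degree ?R = ?N" by simp
  hence "?R \<noteq> 0" using assms by auto
  hence Q0: "?Q \<noteq> 0" using Q_eq[of a f] by auto
  have "degree ([:-a,1:]^2 * ?Q) = degree ([:-a,1:]^2) + degree ?Q" using Q0
    by (intro degree_mult_eq) auto
  hence "degree ([:-a,1:]^2 * ?Q) = degree ?Q + 2" unfolding degree_linear_power by simp
  hence dQ: "degree ?Q = ?N - 2" using Q_eq[of a f] dR by simp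
  have F0: "f3 f \<noteq> 0" using Q0 by auto
  have "degree ((var_y - var_x)^2 * f3 f) = degree ((var_y - var_x)^2) + degree (f3 f)" using F0 unfolding yx
    by (intro degree_mult_eq) auto
  hence "degree ((var_y - var_x)^2 * f3 f) = degree (f3 f) + 2" unfolding yx degree_linear_power by simp
  moreover have "degree (2 * (in_y f - 2 * at_mid f + in_x f)) \<le> ?N"
  proof -
    have a: "degree (in_y f) \<le> ?N" by (auto simp: in_y_def degree_map_poly_le)
    have "degree (at_mid f) \<le> degree (in_y f) * degree (smult [:1/2:] (var_x + var_y))"
      unfolding at_mid_def by (rule degree_pcompose_le)
    also have "\<dots> \<le> ?N * 1" 
      by (intro mult_mono a) (auto simp: var_x_def var_y_def)
    finally have b: "degree (at_mid f) \<le> ?N" by simp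
    have "degree (2 * (in_y f - 2 * at_mid f + in_x f)) \<le> degree (2::complex poly poly) + degree (in_y f - 2 * at_mid f + in_x f)"
      by (rule degree_mult_le)
    also have "\<dots> \<le> ?N"
    proof -
      have "degree (2 * at_mid f) \<le> ?N" using degree_mult_le[of 2 "at_mid f"] b by simp
      hence "degree (in_y f - 2 * at_mid f + in_x f) \<le> ?N"
        by (intro degree_add_le degree_diff_le a) (auto simp: in_x_def)
      thus ?thesis by simp
    qed
    finally show ?thesis .
  qed
  ultimately have "degree (f3 f) \<le> ?N - 2" using f3_eq[of f] by simp
  moreover have "degree ?Q \<le> degree (f3 f)" by (rule degree_map_poly_le)
  ultimately show "degree ?Q = ?N - 2" "degree (f3 f) = ?N - 2" using dQ by auto
qed

lemma keyQ:
  fixes r :: "nat \<Rightarrow> complex" and Q :: "complex poly"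
  assumes f: "f = (\<Prod>l<n. [:- r l, 1:])" and k: "k < n" and i: "i < n" "i \<noteq> k"
    and Qe: "[:-r k,1:]^2 * Q = 2 * (f - 2 * (f \<circ>\<^sub>p [:r k/2,1/2:]) + [:poly f (r k):])"
  shows "poly Q (r i) = 0 \<longleftrightarrow> (\<exists>j<n. j \<noteq> i \<and> j \<noteq> k \<and> 2 * r j = r i + r k)"
proof -
  have pf: "poly f x = 0 \<longleftrightarrow> (\<exists>l<n. x = r l)" for x
    unfolding f poly_prod by (auto simp: prod_zero_iff)
  have fk: "poly f (r k) = 0" using pf k by auto
  have fi: "poly f (r i) = 0" using pf i by auto
  show ?thesis
  proof (cases "r i = r k")
    case False
    have "(r i - r k)^2 * poly Q (r i) = poly ([:-r k,1:]^2 * Q) (r i)" by simp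
    also have "\<dots> = poly (2 * (f - 2 * (f \<circ>\<^sub>p [:r k/2,1/2:]) + [:poly f (r k):])) (r i)"
      by (simp only: Qe)
    also have "\<dots> = -4 * poly f ((r k + r i)/2)"
      using fk fi by (simp add: poly_pcompose add_divide_distrib)
    finally have eq: "(r i - r k)^2 * poly Q (r i) = -4 * poly f ((r k + r i)/2)" .
    have nz: "(r i - r k)^2 \<noteq> 0" using False by simp
    have "poly Q (r i) = 0 \<longleftrightarrow> poly f ((r k + r i)/2) = 0"
    proof
      assume "poly Q (r i) = 0" thus "poly f ((r k + r i)/2) = 0" using eq by simp
    next
      assume "poly f ((r k + r i)/2) = 0" thus "poly Q (r i) = 0" using eq nz by simp
    qed
    also have "\<dots> \<longleftrightarrow> (\<exists>j<n. j \<noteq> i \<and> j \<noteq> k \<and> 2 * r j = r i + r k)"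
    proof
      assume "poly f ((r k + r i)/2) = 0"
      then obtain j where j: "j < n" "(r k + r i)/2 = r j" using pf by blast
      hence e: "2 * r j = r i + r k" by (simp add: field_simps)
      have "j \<noteq> i" using e False by (auto simp: algebra_simps)
      moreover have "j \<noteq> k" using e False by (auto simp: algebra_simps)
      ultimately show "\<exists>j<n. j \<noteq> i \<and> j \<noteq> k \<and> 2 * r j = r i + r k" using j e by blast
    next
      assume "\<exists>j<n. j \<noteq> i \<and> j \<noteq> k \<and> 2 * r j = r i + r k"
      then obtain j where j: "j < n" "2 * r j = r i + r k" by blast
      hence "(r k + r i)/2 = r j" by (simp add: field_simps)
      thus "poly f ((r k + r i)/2) = 0" using pf j by blast
    qed
    finally show ?thesis .
  next
    case True
    define a where "a = r k"
    define g where "g = (\<Prod>l\<in>{..<n} - {i} - {k}. [:- r l, 1:])"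
    define m where "m = [:a/2, 1/2:]"
    have "f = [:- r i, 1:] * (\<Prod>l\<in>{..<n} - {i}. [:- r l, 1:])"
      unfolding f using i by (subst prod.remove[of _ i]) auto
    also have "(\<Prod>l\<in>{..<n} - {i}. [:- r l, 1:]) = [:- r k, 1:] * g"
      unfolding g_def using i k by (subst prod.remove[of _ k]) auto
    finally have fg: "f = [:-a,1:]^2 * g" unfolding a_def by (simp only: True power2_eq_square mult.assoc)
    have Qe': "[:-a,1:]^2 * Q = 2 * (f - 2 * (f \<circ>\<^sub>p m))" using Qe fk unfolding a_def m_def by simp
    have "[:-a,1:]^2 * Q = [:-a,1:]^2 * (2 * g - g \<circ>\<^sub>p m)"
    proof (rule poly_eq_poly_eq_iff[THEN iffD1], rule ext)
      fix y
      have "poly ([:-a,1:]^2 * Q) y = 2 * ((y - a)^2 * poly g y - 2 * (((a/2 + y/2) - a)^2 * poly g (a/2 + y/2)))"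
        unfolding Qe' by (simp add: fg poly_pcompose m_def)
      also have "\<dots> = poly ([:-a,1:]^2 * (2 * g - g \<circ>\<^sub>p m)) y"
        by (simp add: poly_pcompose m_def power2_eq_square field_simps)
      finally show "poly ([:-a,1:]^2 * Q) y = poly ([:-a,1:]^2 * (2 * g - g \<circ>\<^sub>p m)) y" .
    qed
    hence Qg: "Q = 2 * g - g \<circ>\<^sub>p m" by (rule mult_left_cancel[THEN iffD1, rotated]) simp
    have "poly Q (r i) = poly g a" unfolding Qg using True by (simp add: poly_pcompose m_def a_def)
    also have "\<dots> = 0 \<longleftrightarrow> (\<exists>l\<in>{..<n} - {i} - {k}. a = r l)"
      unfolding g_def poly_prod by (auto simp: prod_zero_iff)
    also have "\<dots> \<longleftrightarrow> (\<exists>j<n. j \<noteq> i \<and> j \<noteq> k \<and> a = r j)" by blast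
    also have "\<dots> \<longleftrightarrow> (\<exists>j<n. j \<noteq> i \<and> j \<noteq> k \<and> 2 * r j = r i + r k)"
    proof -
      have "(2 * r j = r i + r k) \<longleftrightarrow> (a = r j)" for j unfolding a_def True by auto
      thus ?thesis by blast
    qed
    finally show ?thesis .
  qed
qed

theorem proposition5:
  fixes n :: nat and r :: "nat \<Rightarrow> complex" and f :: "complex poly"
  assumes "n \<ge> 3"
    and "f = (\<Prod>i<n. [:- r i, 1:])"
  shows "resultant f (resultant (f1 f) (f3 f)) = 0 \<longleftrightarrow> D2 n r = 0"
proof -
  have degf: "degree f = n" unfolding assms(2) by (subst degree_prod_eq_sum_degree) auto
  have lcf: "lead_coeff f = 1" unfolding assms(2) lead_coeff_prod by simp
  have f0: "f \<noteq> 0" using lcf by auto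
  have pf: "poly f x = 0 \<longleftrightarrow> (\<exists>l<n. x = r l)" for x
    unfolding assms(2) poly_prod by (auto simp: prod_zero_iff)
  define P where "P a = map_poly (\<lambda>c. poly c a) (f1 f)" for a
  define Q where "Q a = map_poly (\<lambda>c. poly c a) (f3 f)" for a
  have RP: "poly (resultant (f1 f) (f3 f)) a = resultant (P a) (Q a)" for a
  proof -
    have "degree (P a) = degree (f1 f)" unfolding P_def using deg_P(1)[of f a] deg_P(2)[of f] degf assms(1) by simp
    moreover have "degree (Q a) = degree (f3 f)" unfolding Q_def using deg_Q(1)[of f a] deg_Q(2)[of f] degf lcf assms(1) by simp
    ultimately show ?thesis unfolding P_def Q_def by (rule poly_hom.resultant_map_poly[symmetric])
  qed
  have s1: "resultant f (resultant (f1 f) (f3 f)) = 0 \<longleftrightarrow> (\<exists>k<n. resultant (P (r k)) (Q (r k)) = 0)"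
    unfolding res_zero_iff[OF f0] pf RP by blast
  have s2: "resultant (P (r k)) (Q (r k)) = 0 \<longleftrightarrow> (\<exists>i<n. i \<noteq> k \<and> (\<exists>j<n. j \<noteq> i \<and> j \<noteq> k \<and> 2 * r j = r i + r k))"
    if k: "k < n" for k
  proof -
    define G where "G = (\<Prod>l\<in>{..<n} - {k}. [:- r l, 1:])"
    have "f = [:- r k, 1:] * G" unfolding assms(2) G_def using k by (subst prod.remove[of _ k]) auto
    moreover have "[:- r k, 1:] * P (r k) = f" using P_eq[of "r k" f] pf k unfolding P_def by auto
    ultimately have "[:- r k, 1:] * P (r k) = [:- r k, 1:] * G" by metis
    hence PG: "P (r k) = G" by (rule mult_left_cancel[THEN iffD1, rotated]) simp
    have G0: "G \<noteq> 0" unfolding G_def by (auto simp: prod_zero_iff)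
    have rG: "poly G y = 0 \<longleftrightarrow> (\<exists>i<n. i \<noteq> k \<and> y = r i)" for y
      unfolding G_def poly_prod by (auto simp: prod_zero_iff)
    have "resultant (P (r k)) (Q (r k)) = 0 \<longleftrightarrow> (\<exists>y. poly G y = 0 \<and> poly (Q (r k)) y = 0)"
      unfolding PG by (rule res_zero_iff[OF G0])
    also have "\<dots> \<longleftrightarrow> (\<exists>i<n. i \<noteq> k \<and> poly (Q (r k)) (r i) = 0)" unfolding rG by blast
    also have "\<dots> \<longleftrightarrow> (\<exists>i<n. i \<noteq> k \<and> (\<exists>j<n. j \<noteq> i \<and> j \<noteq> k \<and> 2 * r j = r i + r k))"
    proof -
      have "poly (Q (r k)) (r i) = 0 \<longleftrightarrow> (\<exists>j<n. j \<noteq> i \<and> j \<noteq> k \<and> 2 * r j = r i + r k)"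
        if "i < n" "i \<noteq> k" for i
        using keyQ[OF assms(2) k that] Q_eq[of "r k" f] unfolding Q_def by blast
      thus ?thesis by blast
    qed
    finally show ?thesis .
  qed
  define S where "S = {(i,j,k). i < n \<and> j < n \<and> k < n \<and> i < j \<and> j \<noteq> k \<and> k \<noteq> i}"
  have finS: "finite S" 
    by (rule finite_subset[of _ "{..<n} \<times> {..<n} \<times> {..<n}"]) (auto simp: S_def)
  have "D2 n r = 0 \<longleftrightarrow> (\<exists>x\<in>S. (case x of (i,j,k) \<Rightarrow> 2 * r k - r i - r j) = 0)"
    unfolding D2_def S_def[symmetric] using finS by (simp add: prod_zero_iff)
  also have "\<dots> \<longleftrightarrow> (\<exists>i j k. i < n \<and> j < n \<and> k < n \<and> i < j \<and> j \<noteq> k \<and> k \<noteq> i \<and> 2 * r k = r i + r j)"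
    unfolding S_def by (auto simp: algebra_simps)
  finally have D: "D2 n r = 0 \<longleftrightarrow> (\<exists>i j k. i < n \<and> j < n \<and> k < n \<and> i < j \<and> j \<noteq> k \<and> k \<noteq> i \<and> 2 * r k = r i + r j)" .
  show ?thesis
    unfolding s1 D
  proof
    assume "\<exists>k<n. resultant (P (r k)) (Q (r k)) = 0"
    then obtain k i j where h: "k < n" "i < n" "i \<noteq> k" "j < n" "j \<noteq> i" "j \<noteq> k" "2 * r j = r i + r k"
      using s2 by blast
    show "\<exists>i j k. i < n \<and> j < n \<and> k < n \<and> i < j \<and> j \<noteq> k \<and> k \<noteq> i \<and> 2 * r k = r i + r j"
    proof (cases "i < k")
      case True
      thus ?thesis using h by blast
    next
      case False
      hence "k < i" using h(3) by simp
      moreover have "2 * r j = r k + r i" using h(7) by (simp add: add.commute)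
      ultimately show ?thesis using h by blast
    qed
  next
    assume "\<exists>i j k. i < n \<and> j < n \<and> k < n \<and> i < j \<and> j \<noteq> k \<and> k \<noteq> i \<and> 2 * r k = r i + r j"
    then obtain i j k where "i < n" "j < n" "k < n" "i < j" "j \<noteq> k" "k \<noteq> i" "2 * r k = r i + r j" by blast
    hence "resultant (P (r i)) (Q (r i)) = 0" using s2[of i] by (metis add.commute less_irrefl)
    thus "\<exists>k<n. resultant (P (r k)) (Q (r k)) = 0" using \<open>i < n\<close> by blast
  qed
qed
end
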